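(* Let $m\ge 2$ be an integer and let $\gamma\neq 0$, $u\neq 0$ be real numbers. For $\kappa=k_x+ik_y\in\mathbb C$ (identified with $(k_x,k_y)\in\mathbb R^2$), let $\hat H(\kappa,\gamma,u)$ be the $2m\times 2m$ Hermitian matrix described in the context, and for real $k$ write $\hat H(k,\gamma,u)$ for this matrix at $\kappa=k$ (i.e. $k_x=k$, $k_y=0$). Let $\kappa=ke^{i\theta}$ with $k\ge 0$, $\theta\in[0,2\pi)$. Then $$U^*(\theta)\,\hat H(\kappa,\gamma,u)\,U(\theta)=\hat H(k,\gamma,u),\qquad G_1\,\hat H(k,\gamma,u)\,G_1=\hat H(k,\gamma,-u),$$ $$G_1\Gamma_3\big(-\hat H(k,\gamma,u)\big)\Gamma_3G_1=\hat H(k,\gamma,u),\qquad \Gamma_3\,\hat H(k,\gamma,u)\,\Gamma_3=\hat H(-k,-\gamma,u),$$ where the last three identities hold for all real $k$.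
   Context: Let $\sigma_1=\begin{pmatrix}0&1\\1&0\end{pmatrix}$, $\sigma_3=\begin{pmatrix}1&0\\0&-1\end{pmatrix}$, $A=\begin{pmatrix}0&0\\1&0\end{pmatrix}$. For $1\le j\le m$ set $u_j=\frac{u}{m-1}\big(j-\frac{m+1}{2}\big)$. The matrix $\hat H(\kappa,\gamma,u)$ is the $2m\times 2m$ matrix written in $m\times m$ blocks of size $2\times 2$: the $j$-th diagonal block is $u_jI_2+\begin{pmatrix}0&\bar\kappa\\ \kappa&0\end{pmatrix}$ (i.e. $u_jI_2+k_x\sigma_1+k_y\sigma_2$), the block in position $(j,j+1)$ is $\gamma A$, the block in position $(j+1,j)$ is $\gamma A^*$ ($1\le j\le m-1$), and all other blocks vanish. (This is the Fourier symbol of an effective Dirac model of $m$-layer rhombohedral graphene with valley index $+1$, unit Fermi velocity and AB stacking.) $U(\theta)$ is the diagonal unitary matrix $\mathrm{Diag}(1,e^{i\theta},e^{i\theta},e^{2i\theta},e^{2i\theta},\ldots,e^{i(m-1)\theta},e^{i(m-1)\theta},e^{im\theta})$ (diagonal exponents $0,1,1,2,2,\ldots,m-1,m-1,m$). $\Gamma_3$ is the $2m\times2m$ block-diagonal matrix with all diagonal blocks equal to $\sigma_3$, and $G_1$ is the $2m\times 2m$ block matrix with $\sigma_1$ in each block-antidiagonal position $(j,m+1-j)$, $1\le j\le m$, and zero blocks elsewhere. *)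

theory Defs
  imports Complex_Main "Jordan_Normal_Form.Schur_Decomposition"
begin

text \<open>All matrices are 2m x 2m complex matrices (Jordan_Normal_Form mat), indexed from 0.
 Row/column index r belongs to the 2x2 block  r div 2  (0-based block j corresponds to the
 paper's block j+1) and has position  r mod 2  inside the block.\<close>

definition layer_pot :: "nat \<Rightarrow> real \<Rightarrow> nat \<Rightarrow> real" where
  "layer_pot m u j = u / (real m - 1) * (real (j + 1) - (real m + 1) / 2)"

definition Hhat :: "nat \<Rightarrow> complex \<Rightarrow> real \<Rightarrow> real \<Rightarrow> complex mat" where
  "Hhat m \<kappa> \<gamma> u = mat (2*m) (2*m) (\<lambda>(r, c).
     let j = r div 2; l = c div 2; a = r mod 2; b = c mod 2 in
     (if l = j then
        (if a = b then complex_of_real (layer_pot m u j)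
         else if a = 0 then cnj \<kappa> else \<kappa>)
      else if l = j + 1 then
        (if a = 1 \<and> b = 0 then complex_of_real \<gamma> else 0)
      else if j = l + 1 then
        (if a = 0 \<and> b = 1 then complex_of_real \<gamma> else 0)
      else 0))"

definition Umat :: "nat \<Rightarrow> real \<Rightarrow> complex mat" where
  "Umat m \<theta> = mat (2*m) (2*m) (\<lambda>(r, c).
     if r = c then cis (real ((r + 1) div 2) * \<theta>) else 0)"

definition Gamma3 :: "nat \<Rightarrow> complex mat" where
  "Gamma3 m = mat (2*m) (2*m) (\<lambda>(r, c).
     if r = c then (if even r then 1 else -1) else 0)"

definition G1 :: "nat \<Rightarrow> complex mat" where
  "G1 m = mat (2*m) (2*m) (\<lambda>(r, c).
     if c div 2 + r div 2 = m - 1 \<and> r mod 2 \<noteq> c mod 2 then 1 else 0)"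

end

theory Submission
  imports Defs
begin


lemma diag_left:
  assumes "A \<in> carrier_mat n nc"
  shows "mat n n (\<lambda>(r,c). if r = c then d r else 0) * A = mat n nc (\<lambda>(r,c). d r * A $$ (r,c))"
proof (rule eq_matI)
  fix i j assume i: "i < dim_row (mat n nc (\<lambda>(r,c). d r * A $$ (r,c)))" and j: "j < dim_col (mat n nc (\<lambda>(r,c). d r * A $$ (r,c)))"
  have "(\<Sum>k\<in>{0..<n}. (if i = k then d i else 0) * A $$ (k, j)) = (\<Sum>k\<in>{0..<n}. if k = i then d i * A $$ (i, j) else 0)"
    by (rule sum.cong) auto
  also have "\<dots> = d i * A $$ (i, j)" using i by simp
  finally show "(mat n n (\<lambda>(r,c). if r = c then d r else 0) * A) $$ (i, j) = mat n nc (\<lambda>(r,c). d r * A $$ (r,c)) $$ (i, j)"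
    using i j assms by (simp add: scalar_prod_def)
qed (use assms in auto)

lemma diag_right:
  assumes "A \<in> carrier_mat nr n"
  shows "A * mat n n (\<lambda>(r,c). if r = c then d r else 0) = mat nr n (\<lambda>(r,c). A $$ (r,c) * d c)"
proof (rule eq_matI)
  fix i j assume i: "i < dim_row (mat nr n (\<lambda>(r,c). A $$ (r,c) * d c))" and j: "j < dim_col (mat nr n (\<lambda>(r,c). A $$ (r,c) * d c))"
  have "(\<Sum>k\<in>{0..<n}. A $$ (i, k) * (if k = j then d k else 0)) = (\<Sum>k\<in>{0..<n}. if k = j then A $$ (i, j) * d j else 0)"
    by (rule sum.cong) auto
  also have "\<dots> = A $$ (i, j) * d j" using j by simp
  finally show "(A * mat n n (\<lambda>(r,c). if r = c then d r else 0)) $$ (i, j) = mat nr n (\<lambda>(r,c). A $$ (r,c) * d c) $$ (i, j)"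
    using i j assms by (simp add: scalar_prod_def)
qed (use assms in auto)

lemma G1_alt: "G1 m = mat (2*m) (2*m) (\<lambda>(r,c). if c = 2*m - 1 - r then 1 else 0)"
proof (rule eq_matI)
  fix i j assume "i < dim_row (mat (2*m) (2*m) (\<lambda>(r,c). if c = 2*m - 1 - r then (1::complex) else 0))"
    "j < dim_col (mat (2*m) (2*m) (\<lambda>(r,c). if c = 2*m - 1 - r then (1::complex) else 0))"
  then have ij: "i < 2*m" "j < 2*m" by auto
  have "(j div 2 + i div 2 = m - 1 \<and> i mod 2 \<noteq> j mod 2) = (j = 2*m - 1 - i)"
    using ij by (cases "i mod 2 = 0"; cases "j mod 2 = 0"; auto; arith)
  then show "G1 m $$ (i, j) = mat (2*m) (2*m) (\<lambda>(r,c). if c = 2*m - 1 - r then (1::complex) else 0) $$ (i, j)"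
    using ij by (simp add: G1_def)
qed (auto simp: G1_def)

lemma G1_left:
  assumes "A \<in> carrier_mat (2*m) nc"
  shows "G1 m * A = mat (2*m) nc (\<lambda>(r,c). A $$ (2*m - 1 - r, c))"
proof (rule eq_matI)
  fix i j assume i: "i < dim_row (mat (2*m) nc (\<lambda>(r,c). A $$ (2*m - 1 - r, c)))" and j: "j < dim_col (mat (2*m) nc (\<lambda>(r,c). A $$ (2*m - 1 - r, c)))"
  have "(\<Sum>k\<in>{0..<2*m}. (if k = 2*m - 1 - i then 1 else 0) * A $$ (k, j)) = (\<Sum>k\<in>{0..<2*m}. if k = 2*m - 1 - i then A $$ (2*m - 1 - i, j) else 0)"
    by (rule sum.cong) auto
  also have "\<dots> = A $$ (2*m - 1 - i, j)" using i by simp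
  finally show "(G1 m * A) $$ (i, j) = mat (2*m) nc (\<lambda>(r,c). A $$ (2*m - 1 - r, c)) $$ (i, j)"
    using i j assms by (simp add: scalar_prod_def G1_alt)
qed (use assms in \<open>auto simp: G1_def\<close>)

lemma G1_right:
  assumes "A \<in> carrier_mat nr (2*m)"
  shows "A * G1 m = mat nr (2*m) (\<lambda>(r,c). A $$ (r, 2*m - 1 - c))"
proof (rule eq_matI)
  fix i j assume i: "i < dim_row (mat nr (2*m) (\<lambda>(r,c). A $$ (r, 2*m - 1 - c)))" and j: "j < dim_col (mat nr (2*m) (\<lambda>(r,c). A $$ (r, 2*m - 1 - c)))"
  have "(\<Sum>k\<in>{0..<2*m}. A $$ (i, k) * (if j = 2*m - 1 - k then 1 else 0)) = (\<Sum>k\<in>{0..<2*m}. if k = 2*m - 1 - j then A $$ (i, 2*m - 1 - j) else 0)"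
    using j by (intro sum.cong) auto
  also have "\<dots> = A $$ (i, 2*m - 1 - j)" using j by simp
  finally show "(A * G1 m) $$ (i, j) = mat nr (2*m) (\<lambda>(r,c). A $$ (r, 2*m - 1 - c)) $$ (i, j)"
    using i j assms by (simp add: scalar_prod_def G1_alt)
qed (use assms in \<open>auto simp: G1_def\<close>)

lemma adjU: "mat_adjoint (Umat m \<theta>) = mat (2*m) (2*m) (\<lambda>(r, c). if r = c then cis (- (real ((r + 1) div 2) * \<theta>)) else 0)"
  by (rule eq_matI) (auto simp: mat_adjoint_def Umat_def mat_of_rows_def cis_cnj)


lemma Hhat_carrier[simp]: "Hhat m \<kappa> \<gamma> u \<in> carrier_mat (2*m) (2*m)"
  by (simp add: Hhat_def)

lemma Hhat_entry:
  assumes "p < m" "q < m" "a < 2" "b < 2"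
  shows "Hhat m \<kappa> \<gamma> u $$ (2*p+a, 2*q+b) =
    (if q = p then (if a = b then complex_of_real (layer_pot m u p) else if a = 0 then cnj \<kappa> else \<kappa>)
     else if q = p + 1 then (if a = 1 \<and> b = 0 then complex_of_real \<gamma> else 0)
     else if p = q + 1 then (if a = 0 \<and> b = 1 then complex_of_real \<gamma> else 0)
     else 0)"
proof -
  have "2*p+a < 2*m" "2*q+b < 2*m" using assms by auto
  moreover have "(2*p+a) div 2 = p" "(2*q+b) div 2 = q" "(2*p+a) mod 2 = a" "(2*q+b) mod 2 = b"
    using assms by auto
  ultimately show ?thesis by (simp add: Hhat_def Let_def)
qed

lemma idx_split:
  fixes i m :: nat assumes "i < 2*m" obtains p a where "i = 2*p+a" "p < m" "a < 2"
proof -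
  have "i = 2*(i div 2) + i mod 2" by simp
  moreover have "i div 2 < m" "i mod 2 < 2" using assms by auto
  ultimately show ?thesis using that by blast
qed

lemma rev_idx: fixes p m a :: nat assumes "p < m" "a < 2" shows "2*m - 1 - (2*p+a) = 2*(m-1-p) + (1-a)"
  using assms by arith

lemma pot_neg: assumes "p < m" "m \<ge> 2" shows "layer_pot m (-u) (m-1-p) = layer_pot m u p"
proof -
  have "real (m - 1 - p + 1) = real m - real p" using assms by (simp add: of_nat_diff)
  moreover have "real m - 1 \<noteq> 0" using assms by simp
  ultimately show ?thesis unfolding layer_pot_def by (simp add: field_simps)
qed

lemma cis_sandwich: "cis a * z * cis b = z * cis (a+b)"
  by (simp add: cis_mult[symmetric] mult.commute mult.left_commute)

lemma part1: "mat_adjoint (Umat m \<theta>) * Hhat m (complex_of_real k * cis \<theta>) \<gamma> u * Umat m \<theta>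
             = Hhat m (complex_of_real k) \<gamma> u"
proof -
  have "mat_adjoint (Umat m \<theta>) * Hhat m (complex_of_real k * cis \<theta>) \<gamma> u * Umat m \<theta>
     = mat (2*m) (2*m) (\<lambda>(r,c). cis (- (real ((r + 1) div 2) * \<theta>)) * Hhat m (complex_of_real k * cis \<theta>) \<gamma> u $$ (r,c) * cis (real ((c + 1) div 2) * \<theta>))"
    unfolding adjU unfolding Umat_def
    by (subst diag_left[where nc="2*m"], simp, subst diag_right[where nr="2*m"], auto)
  also have "\<dots> = Hhat m (complex_of_real k) \<gamma> u"
  proof (rule eq_matI)
    fix i j assume "i < dim_row (Hhat m (complex_of_real k) \<gamma> u)" "j < dim_col (Hhat m (complex_of_real k) \<gamma> u)"
    then have ij: "i < 2*m" "j < 2*m" by (auto simp: Hhat_def)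
    obtain p a where i: "i = 2*p+a" "p < m" "a < 2" using idx_split[OF ij(1)] .
    obtain q b where j: "j = 2*q+b" "q < m" "b < 2" using idx_split[OF ij(2)] .
    have a: "a = 0 \<or> a = 1" and b: "b = 0 \<or> b = 1" using i j by auto
    show "mat (2*m) (2*m) (\<lambda>(r,c). cis (- (real ((r + 1) div 2) * \<theta>)) * Hhat m (complex_of_real k * cis \<theta>) \<gamma> u $$ (r,c) * cis (real ((c + 1) div 2) * \<theta>)) $$ (i, j) = Hhat m (complex_of_real k) \<gamma> u $$ (i, j)"
      using ij i j a b
      by (auto simp: Hhat_entry cis_sandwich cis_cnj cis_mult distrib_right)
  qed (auto simp: Hhat_def)
  finally show ?thesis .
qed


definition sg :: "nat \<Rightarrow> complex" where "sg r = (if even r then 1 else -1)"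

lemma G3_carrier[simp]: "Gamma3 m \<in> carrier_mat (2*m) (2*m)" by (simp add: Gamma3_def)
lemma G1_carrier[simp]: "G1 m \<in> carrier_mat (2*m) (2*m)" by (simp add: G1_def)

lemma conj3:
  assumes "A \<in> carrier_mat (2*m) (2*m)"
  shows "Gamma3 m * A * Gamma3 m = mat (2*m) (2*m) (\<lambda>(r,c). sg r * A $$ (r,c) * sg c)"
proof -
  have G: "Gamma3 m = mat (2*m) (2*m) (\<lambda>(r,c). if r = c then sg r else 0)"
    unfolding Gamma3_def sg_def ..
  show ?thesis unfolding G
    using assms by (subst diag_left[where nc="2*m"], simp, subst diag_right[where nr="2*m"], auto)
qed

lemma conj1:
  assumes "A \<in> carrier_mat (2*m) (2*m)"
  shows "G1 m * A * G1 m = mat (2*m) (2*m) (\<lambda>(r,c). A $$ (2*m-1-r, 2*m-1-c))"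
  using assms by (subst G1_left[where nc="2*m"], simp, subst G1_right[where nr="2*m"], auto)

lemma sg_idx: "a < 2 \<Longrightarrow> sg (2*p+a) = (if a = 0 then 1 else -1)"
  by (auto simp: sg_def)

lemma part2:
  assumes "m \<ge> 2"
  shows "G1 m * Hhat m (complex_of_real k) \<gamma> u * G1 m = Hhat m (complex_of_real k) \<gamma> (-u)"
  unfolding conj1[OF Hhat_carrier]
proof (rule eq_matI)
  fix i j assume "i < dim_row (Hhat m (complex_of_real k) \<gamma> (-u))" "j < dim_col (Hhat m (complex_of_real k) \<gamma> (-u))"
  then have ij: "i < 2*m" "j < 2*m" by (auto simp: Hhat_def)
  obtain p a where i: "i = 2*p+a" "p < m" "a < 2" using idx_split[OF ij(1)] .
  obtain q b where j: "j = 2*q+b" "q < m" "b < 2" using idx_split[OF ij(2)] .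
  have a: "a = 0 \<or> a = 1" and b: "b = 0 \<or> b = 1" using i j by auto
  have e: "Hhat m (complex_of_real k) \<gamma> u $$ (2*m-1-i, 2*m-1-j) = Hhat m (complex_of_real k) \<gamma> u $$ (2*(m-1-p) + (1-a), 2*(m-1-q) + (1-b))"
    unfolding i(1) j(1) rev_idx[OF i(2,3)] rev_idx[OF j(2,3)] ..
  have pq: "m - 1 - p < m" "m - 1 - q < m" using i j by auto
  have a2: "1 - a < 2" and b2: "1 - b < 2" by auto
  have L1: "mat (2*m) (2*m) (\<lambda>(r,c). Hhat m (complex_of_real k) \<gamma> u $$ (2*m-1-r, 2*m-1-c)) $$ (i, j)
     = Hhat m (complex_of_real k) \<gamma> u $$ (2*(m-1-p) + (1-a), 2*(m-1-q) + (1-b))"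
    using ij e by simp
  note L = L1[unfolded Hhat_entry[OF pq a2 b2]]
  have R1: "Hhat m (complex_of_real k) \<gamma> (-u) $$ (i, j) = Hhat m (complex_of_real k) \<gamma> (-u) $$ (2*p+a, 2*q+b)"
    using i j by simp
  note R = R1[unfolded Hhat_entry[OF i(2) j(2) i(3) j(3)]]
  have pn: "layer_pot m u (m-1-p) = layer_pot m (-u) p" using pot_neg[OF i(2) assms, of "-u"] by simp
  have c1: "(m-1-q = m-1-p) = (q = p)" "(m-1-q = m-1-p+1) = (p = q+1)" "(m-1-p = m-1-q+1) = (q = p+1)"
    using i(2) j(2) by arith+
  show "mat (2*m) (2*m) (\<lambda>(r,c). Hhat m (complex_of_real k) \<gamma> u $$ (2*m-1-r, 2*m-1-c)) $$ (i, j) = Hhat m (complex_of_real k) \<gamma> (-u) $$ (i, j)"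
    unfolding L R pn c1 using a b by (elim disjE) simp_all
qed (auto simp: Hhat_def)

lemma part4:
  shows "Gamma3 m * Hhat m (complex_of_real k) \<gamma> u * Gamma3 m = Hhat m (complex_of_real (-k)) (-\<gamma>) u"
  unfolding conj3[OF Hhat_carrier]
proof (rule eq_matI)
  fix i j assume "i < dim_row (Hhat m (complex_of_real (-k)) (-\<gamma>) u)" "j < dim_col (Hhat m (complex_of_real (-k)) (-\<gamma>) u)"
  then have ij: "i < 2*m" "j < 2*m" by (auto simp: Hhat_def)
  obtain p a where i: "i = 2*p+a" "p < m" "a < 2" using idx_split[OF ij(1)] .
  obtain q b where j: "j = 2*q+b" "q < m" "b < 2" using idx_split[OF ij(2)] .
  have a: "a = 0 \<or> a = 1" and b: "b = 0 \<or> b = 1" using i j by auto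
  show "mat (2*m) (2*m) (\<lambda>(r,c). sg r * Hhat m (complex_of_real k) \<gamma> u $$ (r,c) * sg c) $$ (i, j) = Hhat m (complex_of_real (-k)) (-\<gamma>) u $$ (i, j)"
    using ij a b i j
    apply (simp only: index_mat split)
    by (simp add: Hhat_entry sg_idx)
qed (auto simp: Hhat_def)

lemma part3:
  assumes "m \<ge> 2"
  shows "G1 m * Gamma3 m * (- Hhat m (complex_of_real k) \<gamma> u) * Gamma3 m * G1 m
             = Hhat m (complex_of_real k) \<gamma> u"
proof -
  let ?H = "Hhat m (complex_of_real k) \<gamma> u"
  have c: "- ?H \<in> carrier_mat (2*m) (2*m)" by simp
  have "G1 m * Gamma3 m * (- ?H) * Gamma3 m * G1 m = G1 m * (Gamma3 m * (- ?H) * Gamma3 m) * G1 m"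
  proof -
    have "G1 m * Gamma3 m * (- ?H) = G1 m * (Gamma3 m * (- ?H))"
      using c by (rule assoc_mult_mat[OF G1_carrier G3_carrier])
    moreover have "G1 m * (Gamma3 m * (- ?H)) * Gamma3 m = G1 m * (Gamma3 m * (- ?H) * Gamma3 m)"
      by (rule assoc_mult_mat[OF G1_carrier mult_carrier_mat[OF G3_carrier c] G3_carrier])
    ultimately show ?thesis by simp
  qed
  also have "Gamma3 m * (- ?H) * Gamma3 m = - (Gamma3 m * ?H * Gamma3 m)"
    by (simp add: uminus_mult_left_mat uminus_mult_right_mat Gamma3_def Hhat_def)
  also have "\<dots> = - Hhat m (complex_of_real (-k)) (-\<gamma>) u" by (simp add: part4)
  also have "G1 m * (- Hhat m (complex_of_real (-k)) (-\<gamma>) u) * G1 m = - (G1 m * Hhat m (complex_of_real (-k)) (-\<gamma>) u * G1 m)"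
    by (simp add: uminus_mult_left_mat uminus_mult_right_mat G1_def Hhat_def)
  also have "\<dots> = - Hhat m (complex_of_real (-k)) (-\<gamma>) (-u)" using part2[OF assms, of "-k" "-\<gamma>" u] by (rule arg_cong)
  also have "\<dots> = ?H"
  proof (rule eq_matI)
    fix i j assume "i < dim_row ?H" "j < dim_col ?H"
    then have ij: "i < 2*m" "j < 2*m" by (auto simp: Hhat_def)
    show "(- Hhat m (complex_of_real (-k)) (-\<gamma>) (-u)) $$ (i,j) = ?H $$ (i,j)"
      using ij by (simp add: Hhat_def Let_def layer_pot_def)
  qed (auto simp: Hhat_def)
  finally show ?thesis .
qed


theorem proposition2p1:
  fixes m :: nat and \<gamma> u k \<theta> :: real
  assumes "m \<ge> 2" and "\<gamma> \<noteq> 0" and "u \<noteq> 0"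
  shows "(k \<ge> 0 \<and> 0 \<le> \<theta> \<and> \<theta> < 2 * pi \<longrightarrow>
           mat_adjoint (Umat m \<theta>) * Hhat m (complex_of_real k * cis \<theta>) \<gamma> u * Umat m \<theta>
             = Hhat m (complex_of_real k) \<gamma> u)
       \<and> G1 m * Hhat m (complex_of_real k) \<gamma> u * G1 m = Hhat m (complex_of_real k) \<gamma> (-u)
       \<and> G1 m * Gamma3 m * (- Hhat m (complex_of_real k) \<gamma> u) * Gamma3 m * G1 m
             = Hhat m (complex_of_real k) \<gamma> u
       \<and> Gamma3 m * Hhat m (complex_of_real k) \<gamma> u * Gamma3 m
             = Hhat m (complex_of_real (-k)) (-\<gamma>) u"
    using part1 part2[OF assms(1)] part3[OF assms(1)] part4 by blast

end
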